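(* Let $\mathfrak{S}=(\mathcal{X},\mathsf{S},\gamma,(\Lambda_{a})_{a\in\mathcal{A}})$ be a spectral decomposition system for the Euclidean space $\mathfrak{H}$. Let $m\geq 1$ be an integer, let $(X_i)_{1\leq i\leq m}$ be a family in $\mathfrak{H}$, and let $(\alpha_i)_{1\leq i\leq m}$ be a family in $[0,+\infty)$. Then \[ \gamma\Big(\sum_{i=1}^m\alpha_iX_i\Big)\in\operatorname{conv}\Big(\mathsf{S}\cdot\sum_{i=1}^m\alpha_i\gamma(X_i)\Big). \]
   Context: A Euclidean space is a finite-dimensional real inner product space; inner products are written $\langle\cdot,\cdot\rangle$ and norms $\|\cdot\|$. Let $\mathfrak{H}$ and $\mathcal{X}$ be Euclidean spaces, let $\mathsf{S}$ be a group acting on $\mathcal{X}$ by linear isometries (for every $s\in\mathsf{S}$, the map $x\mapsto s\cdot x$ is a linear isometry of $\mathcal{X}$), let $\gamma\colon\mathfrak{H}\to\mathcal{X}$, and let $(\Lambda_a)_{a\in\mathcal{A}}$ be a family of linear operators from $\mathcal{X}$ to $\mathfrak{H}$. The orbit of $x\in\mathcal{X}$ is $\mathsf{S}\cdot x=\{s\cdot x: s\in\mathsf{S}\}$; a map $\tau$ on $\mathcal{X}$ is $\mathsf{S}$-invariant if $\tau(s\cdot x)=\tau(x)$ for all $s,x$. The tuple $(\mathcal{X},\mathsf{S},\gamma,(\Lambda_a)_{a\in\mathcal{A}})$ is a spectral decomposition system for $\mathfrak{H}$ if: [A] every $\Lambda_a$ is an isometry; [B] there exists an $\mathsf{S}$-invariant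 map $\tau\colon\mathcal{X}\to\mathcal{X}$ with $\tau(x)\in\mathsf{S}\cdot x$ for all $x\in\mathcal{X}$ and $\gamma\circ\Lambda_a=\tau$ for all $a\in\mathcal{A}$; [C] for every $X\in\mathfrak{H}$ there is $a\in\mathcal{A}$ with $X=\Lambda_a\gamma(X)$; [D] $\langle X,Y\rangle\leq\langle\gamma(X),\gamma(Y)\rangle$ for all $X,Y\in\mathfrak{H}$. $\operatorname{conv}$ denotes convex hull. *)

theory Defs
  imports "HOL-Analysis.Analysis" "HOL-Algebra.Group_Action"
begin

definition isometric_linear_action ::
  "('g, 'm) monoid_scheme \<Rightarrow> ('g \<Rightarrow> 'x::euclidean_space \<Rightarrow> 'x) \<Rightarrow> bool" where
  "isometric_linear_action G act \<longleftrightarrow>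
     group G \<and> group_action G UNIV act \<and>
     (\<forall>s\<in>carrier G. linear (act s) \<and> (\<forall>x. norm (act s x) = norm x))"

definition spectral_decomposition_system ::
  "('g, 'm) monoid_scheme \<Rightarrow> ('g \<Rightarrow> 'x::euclidean_space \<Rightarrow> 'x) \<Rightarrow>
   ('h::euclidean_space \<Rightarrow> 'x) \<Rightarrow> ('a \<Rightarrow> 'x \<Rightarrow> 'h) \<Rightarrow> bool" where
  "spectral_decomposition_system G act \<gamma> \<Lambda> \<longleftrightarrow>
     isometric_linear_action G act \<and>
     \<comment> \<open>[A] every Lambda_a is a (linear) isometry\<close>
     (\<forall>a. linear (\<Lambda> a) \<and> (\<forall>x. norm (\<Lambda> a x) = norm x)) \<and>
     \<comment> \<open>[B]\<close>
     (\<exists>\<tau>::'x \<Rightarrow> 'x.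
        (\<forall>s\<in>carrier G. \<forall>x. \<tau> (act s x) = \<tau> x) \<and>
        (\<forall>x. \<tau> x \<in> orbit G act x) \<and>
        (\<forall>a. \<gamma> \<circ> \<Lambda> a = \<tau>)) \<and>
     \<comment> \<open>[C]\<close>
     (\<forall>X. \<exists>a. X = \<Lambda> a (\<gamma> X)) \<and>
     \<comment> \<open>[D]\<close>
     (\<forall>X Y. inner X Y \<le> inner (\<gamma> X) (\<gamma> Y))"

end

theory Submission
  imports Defs
begin

lemma lin_iso_inner:
  assumes "linear f" "\<forall>x. norm (f x) = norm x"
  shows "inner (f p) (f q) = inner p q"
proof -
  have "f (p + q) = f p + f q" using assms(1) by (simp add: linear_add)
  then show ?thesis using assms(2) by (metis dot_norm)
qed

theorem theorem3p9:
  fixes G :: "('g, 'm) monoid_scheme"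
    and act :: "'g \<Rightarrow> 'x::euclidean_space \<Rightarrow> 'x"
    and \<gamma> :: "'h::euclidean_space \<Rightarrow> 'x"
    and \<Lambda> :: "'a \<Rightarrow> 'x \<Rightarrow> 'h"
    and m :: nat
    and X :: "nat \<Rightarrow> 'h"
    and \<alpha> :: "nat \<Rightarrow> real"
  assumes "spectral_decomposition_system G act \<gamma> \<Lambda>"
    and "m \<ge> 1"
    and "\<forall>i\<in>{1..m}. \<alpha> i \<ge> 0"
  shows "\<gamma> (\<Sum>i=1..m. \<alpha> i *\<^sub>R X i)
           \<in> convex hull (orbit G act (\<Sum>i=1..m. \<alpha> i *\<^sub>R \<gamma> (X i)))"
proof -
  have grp: "group G" and GA: "group_action G UNIV act"
    and actlin: "\<And>s. s \<in> carrier G \<Longrightarrow> linear (act s)"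
    and actiso: "\<And>s. s \<in> carrier G \<Longrightarrow> \<forall>x. norm (act s x) = norm x"
    and Llin: "\<And>a. linear (\<Lambda> a)" and Liso: "\<And>a. \<forall>x. norm (\<Lambda> a x) = norm x"
    and C: "\<And>Z. \<exists>a. Z = \<Lambda> a (\<gamma> Z)"
    and D: "\<And>P Q. inner P Q \<le> inner (\<gamma> P) (\<gamma> Q)"
    using assms(1) unfolding spectral_decomposition_system_def isometric_linear_action_def
    by auto
  obtain \<tau> :: "'x \<Rightarrow> 'x" where
    tinv: "\<And>s x. s \<in> carrier G \<Longrightarrow> \<tau> (act s x) = \<tau> x"
    and torb: "\<And>x. \<tau> x \<in> orbit G act x"
    and tgL: "\<And>a. \<gamma> \<circ> \<Lambda> a = \<tau>"
    using assms(1) unfolding spectral_decomposition_system_def by metis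
  have tgL': "\<gamma> (\<Lambda> a x) = \<tau> x" for a x using tgL[of a] by (metis comp_apply)
  have actinner: "inner (act s p) (act s q) = inner p q" if "s \<in> carrier G" for s p q
    using lin_iso_inner[OF actlin[OF that] actiso[OF that]] .
  have Linner: "inner (\<Lambda> a p) (\<Lambda> a q) = inner p q" for a p q
    using lin_iso_inner[OF Llin Liso] .
  have orbE: "\<exists>s\<in>carrier G. p = act s x" if "p \<in> orbit G act x" for p x
    using that unfolding orbit_def by auto
  have orbI: "act s x \<in> orbit G act x" if "s \<in> carrier G" for s x
    using that unfolding orbit_def by auto
  have orbact: "act s p \<in> orbit G act x" if "p \<in> orbit G act x" "s \<in> carrier G" for s p x
    using group_action.orbit_trans[OF GA, of x p "act s p"] that orbI by auto
  have tt: "\<tau> (\<tau> x) = \<tau> x" for x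
    using orbE[OF torb[of x]] tinv by metis
  obtain a0 where "(0::'h) = \<Lambda> a0 (\<gamma> 0)" using C by blast
  have ineq: "inner u w \<le> inner (\<tau> u) (\<tau> w)" for u w
    using D[of "\<Lambda> a0 u" "\<Lambda> a0 w"] by (simp add: Linner tgL')
  have tnorm: "norm (\<tau> x) = norm x" for x
    using orbE[OF torb[of x]] actiso by metis
  have orbclosed: "closed (orbit G act x)" for x
  proof -
    let ?O = "orbit G act x"
    have "closure ?O \<subseteq> ?O"
    proof
      fix v assume v: "v \<in> closure ?O"
      have "?O \<subseteq> {p. norm p = norm x}" using orbE actiso by force
      moreover have "closed {p::'x. norm p = norm x}"
        by (intro closed_Collect_eq continuous_intros)
      ultimately have nrm: "closure ?O \<subseteq> {p. norm p = norm x}" by (rule closure_minimal)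
      have hs: "closure ?O \<subseteq> {p. inner w p \<le> inner w (\<tau> x)}" if "\<tau> w = w" for w
      proof (rule closure_minimal[OF _ closed_halfspace_le])
        show "?O \<subseteq> {p. inner w p \<le> inner w (\<tau> x)}"
        proof
          fix q assume "q \<in> ?O"
          then obtain g where g: "g \<in> carrier G" "q = act g x" using orbE by blast
          have "inner q w \<le> inner (\<tau> q) (\<tau> w)" by (rule ineq)
          also have "\<dots> = inner (\<tau> x) w" using g tinv that by simp
          finally show "q \<in> {p. inner w p \<le> inner w (\<tau> x)}" by (simp add: inner_commute)
        qed
      qed
      obtain s where s: "s \<in> carrier G" "\<tau> v = act s v" using orbE[OF torb[of v]] by blast
      have "act s ` closure ?O \<subseteq> closure ?O"
      proof (rule image_closure_subset)
        show "continuous_on (closure ?O) (act s)"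
          using actlin[OF s(1)] by (simp add: linear_conv_bounded_linear linear_continuous_on)
        show "act s ` ?O \<subseteq> closure ?O" using orbact s(1) closure_subset by blast
      qed simp
      then have tv: "\<tau> v \<in> closure ?O" using v s by auto
      have "inner (\<tau> v) (\<tau> v) \<le> inner (\<tau> v) (\<tau> x)" using hs[of "\<tau> v"] tt tv by auto
      moreover have "norm (\<tau> v) = norm x" using nrm tv by auto
      moreover have "norm (\<tau> x) = norm x" by (rule tnorm)
      ultimately have "(norm (\<tau> x - \<tau> v))\<^sup>2 \<le> 0"
        by (simp add: dot_norm_neg inner_commute power2_norm_eq_inner[symmetric])
      then have eq: "\<tau> v = \<tau> x" by simp
      have "v \<in> orbit G act (\<tau> v)"
        using group_action.orbit_sym[OF GA, of v "\<tau> v"] torb by auto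
      then show "v \<in> ?O"
        using group_action.orbit_trans[OF GA, of x "\<tau> x" v] torb eq by auto
    qed
    then show ?thesis using closure_subset_eq by blast
  qed
  define Y where "Y = (\<Sum>i=1..m. \<alpha> i *\<^sub>R X i)"
  define z where "z = (\<Sum>i=1..m. \<alpha> i *\<^sub>R \<gamma> (X i))"
  define y where "y = \<gamma> Y"
  obtain a where a: "Y = \<Lambda> a y" using C y_def by blast
  have ty: "\<tau> y = y" using a tgL' y_def by metis
  have key: "\<exists>p\<in>orbit G act z. inner u y \<le> inner u p" for u
  proof -
    have "inner u y \<le> inner (\<tau> u) y" using ineq[of u y] ty by simp
    also have "\<dots> = inner (\<Lambda> a (\<tau> u)) Y" using a Linner by simp
    also have "\<dots> = (\<Sum>i=1..m. \<alpha> i * inner (\<Lambda> a (\<tau> u)) (X i))"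
      unfolding Y_def by (simp add: inner_sum_right)
    also have "\<dots> \<le> (\<Sum>i=1..m. \<alpha> i * inner (\<tau> u) (\<gamma> (X i)))"
    proof (rule sum_mono)
      fix i assume "i \<in> {1..m}"
      then have "\<alpha> i \<ge> 0" using assms(3) by auto
      moreover have "inner (\<Lambda> a (\<tau> u)) (X i) \<le> inner (\<tau> u) (\<gamma> (X i))"
        using D[of "\<Lambda> a (\<tau> u)" "X i"] by (simp add: tgL' tt)
      ultimately show "\<alpha> i * inner (\<Lambda> a (\<tau> u)) (X i) \<le> \<alpha> i * inner (\<tau> u) (\<gamma> (X i))"
        by (rule mult_left_mono[rotated])
    qed
    also have "\<dots> = inner (\<tau> u) z" unfolding z_def by (simp add: inner_sum_right)
    finally have 1: "inner u y \<le> inner (\<tau> u) z" .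
    obtain s where s: "s \<in> carrier G" "\<tau> u = act s u" using orbE[OF torb[of u]] by blast
    have iS: "inv\<^bsub>G\<^esub> s \<in> carrier G" using grp s(1) by (simp add: group.inv_closed)
    have "act (inv\<^bsub>G\<^esub> s) (act s u) = u"
      using group_action.orbit_sym_aux[OF GA s(1)] by simp
    then have "inner (\<tau> u) z = inner u (act (inv\<^bsub>G\<^esub> s) z)"
      using actinner[OF iS, of "act s u" z] s by simp
    then show ?thesis using 1 orbI[OF iS] by auto
  qed
  have "compact (orbit G act z)"
  proof -
    have "\<forall>p\<in>orbit G act z. norm p \<le> norm z"
    proof
      fix p assume "p \<in> orbit G act z"
      then obtain s where "s \<in> carrier G" "p = act s z" using orbE[of p z] by blast
      then show "norm p \<le> norm z" using actiso[of s] by simp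
    qed
    then have "bounded (orbit G act z)"
      unfolding bounded_iff by (rule exI)
    then show ?thesis using orbclosed[of z] compact_eq_bounded_closed by blast
  qed
  then have cc: "closed (convex hull orbit G act z)"
    by (simp add: compact_convex_hull compact_imp_closed)
  show ?thesis
  proof (rule ccontr)
    assume "\<not> ?thesis"
    then have "y \<notin> convex hull orbit G act z" unfolding y_def Y_def z_def .
    then obtain c b where cb: "inner c y < b" "\<forall>x\<in>convex hull orbit G act z. inner c x > b"
      using separating_hyperplane_closed_point[OF convex_convex_hull cc \<open>y \<notin> convex hull orbit G act z\<close>] by (elim exE conjE)
    obtain p where p: "p \<in> orbit G act z" "inner (-c) y \<le> inner (-c) p" using key[of "-c"] by (elim bexE)
    have "p \<in> convex hull orbit G act z" using p(1) by (rule hull_inc)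
    then have "inner c p > b" using cb(2) by simp
    moreover have "inner c p \<le> inner c y" using p(2) by simp
    ultimately show False using cb(1) by linarith
  qed
qed

end
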